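(* Let $N\ge 1$, let $f:Z[1,N]\times\mathbb{R}\to\mathbb{R}$ be continuous in its second variable for every $k\in Z[1,N]$, and let $p:Z[1,N+2]\to\mathbb{R}$, $q:Z[1,N+1]\to\mathbb{R}$. Assume that (1) there exists $m>0$ such that $s f(k,s)\ge 0$ for all $|s|\ge m$ and $k\in Z[1,N]$; (2) $\eta'(p)\,p_{\min}-\eta(q)\,q_{\max}>0$. Then the functional $J$ is coercive on $E$ and the boundary value problem $$\Delta^2\big(p(k)\Delta^2 y(k-2)\big)+\Delta\big(q(k)\Delta y(k-1)\big)+f(k,y(k))=0\ \ (k\in Z[1,N]),\qquad y(-1)=y(0)=y(N+1)=y(N+2)=0$$ has at least one solution. Moreover, if there exists $k_0\in Z[1,N]$ with $f(k_0,0)\ne 0$, this solution is non-zero.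
   Context: $Z[a,b]=[a,b]\cap\mathbb{Z}$; $\Delta x(k)=x(k+1)-x(k)$, $\Delta^2=\Delta\circ\Delta$; $\Delta^2(p(k)\Delta^2y(k-2))$ means $\Delta^2$ applied to $k\mapsto p(k)\Delta^2 y(k-2)$, similarly for $\Delta(q(k)\Delta y(k-1))$. A solution is a function $y:Z[-1,N+2]\to\mathbb{R}$ satisfying the equation and boundary conditions. $E=\{y:Z[-1,N+2]\to\mathbb{R}\mid y(-1)=y(0)=y(N+1)=y(N+2)=0\}$ with norm $\|y\|=(\sum_{k=1}^N y(k)^2)^{1/2}$; $F(k,s)=\int_0^s f(k,t)dt$; $J(y)=\sum_{k=1}^{N+2}\frac{p(k)}{2}(\Delta^2 y(k-2))^2-\sum_{k=1}^{N+1}\frac{q(k)}{2}(\Delta y(k-1))^2+\sum_{k=1}^N F(k,y(k))$. $J$ is coercive if $J(y)\to+\infty$ as $\|y\|\to\infty$. $p_{\min}=\min_{Z[1,N+2]}p$, $p_{\max}=\max_{Z[1,N+2]}p$, $q_{\min}=\min_{Z[1,N+1]}q$, $q_{\max}=\max_{Z[1,N+1]}q$. With $\tilde y=(y(1),\dots,y(N))^T$, let $V$ be the $(N+1)\times N$ matrix with $V\tilde y=(\Delta y(0),\dots,\Delta y(N))^T$ and $W$ the $(N+2)\times N$ matrix with $W\tilde y=(\Delta^2y(-1),\dots,\Delta^2y(N))^T$ for $y\in E$; $\lambda_1$, $\lambda_2$ are the smallest eigenvalues of $V^TV$ and $W^TW$ respectively. Define $\eta'(p)=\lambda_2$ if $p_{\min}\ge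 0$ and $\eta'(p)=16$ if $p_{\min}<0$; $\eta(q)=\lambda_1$ if $q_{\max}<0$ and $\eta(q)=4$ if $q_{\max}\ge 0$. *)

theory Defs
  imports "HOL-Analysis.Analysis" "Jordan_Normal_Form.Char_Poly"
begin

text \<open>Functions on integer intervals are modelled as functions int => real;
  only the values on the relevant interval matter.\<close>

definition fwd_diff :: "(int \<Rightarrow> real) \<Rightarrow> int \<Rightarrow> real" ("\<Delta>") where
  "\<Delta> x k = x (k + 1) - x k"

definition solution_set :: "nat \<Rightarrow> (int \<Rightarrow> real) set" where
  "solution_set N = {y. y (-1) = 0 \<and> y 0 = 0 \<and> y (int N + 1) = 0 \<and> y (int N + 2) = 0
      \<and> (\<forall>k. k < -1 \<or> k > int N + 2 \<longrightarrow> y k = 0)}"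

definition ynorm :: "nat \<Rightarrow> (int \<Rightarrow> real) \<Rightarrow> real" where
  "ynorm N y = sqrt (\<Sum>k=1..int N. (y k)\<^sup>2)"

definition Fprim :: "(int \<Rightarrow> real \<Rightarrow> real) \<Rightarrow> int \<Rightarrow> real \<Rightarrow> real" where
  "Fprim f k s = (if 0 \<le> s then integral {0..s} (f k) else - integral {s..0} (f k))"

definition Jfun :: "nat \<Rightarrow> (int \<Rightarrow> real) \<Rightarrow> (int \<Rightarrow> real) \<Rightarrow> (int \<Rightarrow> real \<Rightarrow> real)
    \<Rightarrow> (int \<Rightarrow> real) \<Rightarrow> real" where
  "Jfun N p q f y =
     (\<Sum>k=1..int N + 2. p k / 2 * (\<Delta> (\<Delta> y) (k - 2))\<^sup>2)
   - (\<Sum>k=1..int N + 1. q k / 2 * (\<Delta> y (k - 1))\<^sup>2)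
   + (\<Sum>k=1..int N. Fprim f k (y k))"

definition coercive_on :: "nat \<Rightarrow> ((int \<Rightarrow> real) \<Rightarrow> real) \<Rightarrow> bool" where
  "coercive_on N J = (\<forall>M. \<exists>R. \<forall>y \<in> solution_set N. ynorm N y > R \<longrightarrow> J y > M)"

text \<open>Matrix V ((N+1) x N): V ytilde = (Delta y(0), ..., Delta y(N)), ytilde_j = y(j+1).\<close>
definition Vmat :: "nat \<Rightarrow> real mat" where
  "Vmat N = mat (N + 1) N (\<lambda>(i, j).
      (if j = i then 1 else 0) - (if j + 1 = i then 1 else 0))"

text \<open>Matrix W ((N+2) x N): W ytilde = (Delta^2 y(-1), ..., Delta^2 y(N)).\<close>
definition Wmat :: "nat \<Rightarrow> real mat" where
  "Wmat N = mat (N + 2) N (\<lambda>(i, j).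
      (if j = i then 1 else 0) - 2 * (if j + 1 = i then 1 else 0) + (if j + 2 = i then 1 else 0))"

definition smallest_eigenvalue :: "real mat \<Rightarrow> real" where
  "smallest_eigenvalue A = Min {l. eigenvalue A l}"

definition lambda1 :: "nat \<Rightarrow> real" where
  "lambda1 N = smallest_eigenvalue (transpose_mat (Vmat N) * Vmat N)"

definition lambda2 :: "nat \<Rightarrow> real" where
  "lambda2 N = smallest_eigenvalue (transpose_mat (Wmat N) * Wmat N)"

definition pmin :: "nat \<Rightarrow> (int \<Rightarrow> real) \<Rightarrow> real" where
  "pmin N p = Min (p ` {1..int N + 2})"

definition qmax :: "nat \<Rightarrow> (int \<Rightarrow> real) \<Rightarrow> real" where
  "qmax N q = Max (q ` {1..int N + 1})"

definition eta' :: "nat \<Rightarrow> (int \<Rightarrow> real) \<Rightarrow> real" where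
  "eta' N p = (if pmin N p \<ge> 0 then lambda2 N else 16)"

definition eta :: "nat \<Rightarrow> (int \<Rightarrow> real) \<Rightarrow> real" where
  "eta N q = (if qmax N q < 0 then lambda1 N else 4)"

definition is_solution :: "nat \<Rightarrow> (int \<Rightarrow> real) \<Rightarrow> (int \<Rightarrow> real) \<Rightarrow> (int \<Rightarrow> real \<Rightarrow> real)
    \<Rightarrow> (int \<Rightarrow> real) \<Rightarrow> bool" where
  "is_solution N p q f y =
     ((\<forall>k \<in> {1..int N}.
        \<Delta> (\<Delta> (\<lambda>j. p j * \<Delta> (\<Delta> y) (j - 2))) k
      + \<Delta> (\<lambda>j. q j * \<Delta> y (j - 1)) k + f k (y k) = 0)
      \<and> y (-1) = 0 \<and> y 0 = 0 \<and> y (int N + 1) = 0 \<and> y (int N + 2) = 0)"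

end

theory Submission
  imports Defs
begin

lemma Fprim_eq:
  assumes c: "continuous_on UNIV (f k)" and a0: "a \<le> 0" and ax: "a \<le> x"
  shows "Fprim f k x = integral {a..x} (f k) - integral {a..0} (f k)"
proof (cases "0 \<le> x")
  case True
  have "integral {a..0} (f k) + integral {0..x} (f k) = integral {a..x} (f k)"
    by (rule Henstock_Kurzweil_Integration.integral_combine) (use a0 True in \<open>auto intro: integrable_continuous_real continuous_on_subset[OF c]\<close>)
  then show ?thesis using True by (simp add: Fprim_def)
next
  case False
  have "integral {a..x} (f k) + integral {x..0} (f k) = integral {a..0} (f k)"
    by (rule Henstock_Kurzweil_Integration.integral_combine) (use ax False in \<open>auto intro: integrable_continuous_real continuous_on_subset[OF c]\<close>)
  then show ?thesis using False by (simp add: Fprim_def)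
qed

lemma Fprim_deriv:
  assumes c: "continuous_on UNIV (f k)"
  shows "(Fprim f k has_real_derivative f k s) (at s)"
proof -
  define a where "a = min 0 s - 1"
  define b where "b = s + 1"
  have "((\<lambda>x. integral {a..x} (f k)) has_real_derivative f k s) (at s within {a..b})"
    by (rule integral_has_real_derivative) (auto simp: a_def b_def intro: continuous_on_subset[OF c])
  moreover have "at s within {a..b} = at s"
    by (rule at_within_interior) (auto simp: a_def b_def)
  ultimately have "((\<lambda>x. integral {a..x} (f k)) has_real_derivative f k s) (at s)" by simp
  then have "((\<lambda>x. integral {a..x} (f k) - integral {a..0} (f k)) has_real_derivative f k s) (at s)"
    by (auto intro!: derivative_eq_intros)
  then show ?thesis
  proof (rule has_field_derivative_transform_within_open[where S="{a<..}"])
    fix x :: real assume "x \<in> {a<..}"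
    moreover have "a \<le> 0" by (simp add: a_def)
    ultimately show "integral {a..x} (f k) - integral {a..0} (f k) = Fprim f k x"
      using Fprim_eq[of f k a x, OF c] by simp
  qed (auto simp: a_def)
qed

lemma Fprim_cont:
  assumes c: "continuous_on UNIV (f k)"
  shows "continuous_on UNIV (Fprim f k)"
  using Fprim_deriv[of f k, OF c] by (meson DERIV_isCont continuous_at_imp_continuous_on)

lemma Fprim_bdd:
  assumes c: "continuous_on UNIV (f k)" and m: "m > 0"
    and sg: "\<forall>s. \<bar>s\<bar> \<ge> m \<longrightarrow> s * f k s \<ge> 0"
  shows "\<exists>C. \<forall>s. Fprim f k s \<ge> C"
proof -
  have ne: "{-m..m} \<noteq> {}" using m by simp
  have cc: "continuous_on {-m..m} (Fprim f k)"
    using continuous_on_subset[OF Fprim_cont[of f k, OF c]] by blast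
  obtain x where x: "x \<in> {-m..m}" "\<forall>y\<in>{-m..m}. Fprim f k x \<le> Fprim f k y"
    using continuous_attains_inf[OF compact_Icc ne cc] by blast
  have xm: "Fprim f k x \<le> Fprim f k m" "Fprim f k x \<le> Fprim f k (-m)"
    using x(2) m by auto
  have "Fprim f k s \<ge> Fprim f k x" for s
  proof (cases "\<bar>s\<bar> \<le> m")
    case True then have "s \<in> {-m..m}" by (simp add: abs_le_iff)
    then show ?thesis using x by blast
  next
    case False
    show ?thesis
    proof (cases "s > 0")
      case True
      have "Fprim f k m \<le> Fprim f k s"
      proof (rule DERIV_nonneg_imp_nondecreasing[of m s "Fprim f k"])
        show "m \<le> s" using False True by simp
        fix t assume t: "m \<le> t" "t \<le> s"
        then have "t * f k t \<ge> 0" using sg m by simp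
        then have "f k t \<ge> 0" using t m by (simp add: zero_le_mult_iff)
        then show "\<exists>y. (Fprim f k has_real_derivative y) (at t) \<and> 0 \<le> y"
          using Fprim_deriv[of f k, OF c, of t] by blast
      qed
      then show ?thesis using xm by linarith
    next
      case False2: False
      have "Fprim f k (-m) \<le> Fprim f k s"
      proof (rule DERIV_nonpos_imp_nonincreasing[of s "-m" "Fprim f k"])
        show "s \<le> -m" using False False2 by simp
        fix t assume t: "s \<le> t" "t \<le> -m"
        then have "t * f k t \<ge> 0" using sg m by simp
        then have "f k t \<le> 0" using t m by (simp add: zero_le_mult_iff)
        then show "\<exists>y. (Fprim f k has_real_derivative y) (at t) \<and> y \<le> 0"
          using Fprim_deriv[of f k, OF c, of t] by blast
      qed
      then show ?thesis using xm by linarith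
    qed
  qed
  then show ?thesis by blast
qed

definition cube :: "nat \<Rightarrow> real \<Rightarrow> (int \<Rightarrow> real) set" where
  "cube N R = {y. \<forall>k. y k \<in> (if k \<in> {1..int N} then {-R..R} else {0})}"

definition S0 :: "nat \<Rightarrow> (int \<Rightarrow> real) \<Rightarrow> real" where
  "S0 N y = (\<Sum>k=1..int N. (y k)\<^sup>2)"

lemma compact_cube: "compact (cube N R)"
proof -
  let ?S = "\<lambda>k::int. if k \<in> {1..int N} then {-R..R} else {0::real}"
  have "compactin (product_topology (\<lambda>i. euclidean) UNIV) (PiE UNIV ?S)"
    by (subst compactin_PiE) (auto simp: compactin_euclidean_iff)
  moreover have "PiE UNIV ?S = cube N R" by (auto simp: cube_def PiE_def Pi_def)
  ultimately show ?thesis by (simp add: euclidean_product_topology compactin_euclidean_iff)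
qed

lemma cube_sol: "cube N R \<subseteq> solution_set N"
proof
  fix y assume "y \<in> cube N R"
  then have h: "y k \<in> (if k \<in> {1..int N} then {-R..R} else {0})" for k unfolding cube_def by blast
  have "y k = 0" if "k \<notin> {1..int N}" for k
  proof -
    have "y k \<in> {0}" using h[of k] that by presburger
    then show ?thesis by simp
  qed
  then show "y \<in> solution_set N" unfolding solution_set_def by auto
qed

lemma abs_le_ynorm: "k \<in> {1..int N} \<Longrightarrow> \<bar>y k\<bar> \<le> ynorm N y"
proof -
  assume k: "k \<in> {1..int N}"
  have "(y k)\<^sup>2 \<le> (\<Sum>k=1..int N. (y k)\<^sup>2)"
    by (rule member_le_sum) (use k in auto)
  then have "sqrt ((y k)\<^sup>2) \<le> ynorm N y" unfolding ynorm_def by (rule real_sqrt_le_mono)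
  then show ?thesis by simp
qed

lemma sol_zero: "y \<in> solution_set N \<Longrightarrow> k \<notin> {1..int N} \<Longrightarrow> y k = 0"
proof -
  assume y: "y \<in> solution_set N" and k: "k \<notin> {1..int N}"
  have "k < -1 \<or> k > int N + 2 \<or> k = -1 \<or> k = 0 \<or> k = int N + 1 \<or> k = int N + 2"
    using k by auto
  then show "y k = 0" using y unfolding solution_set_def by auto
qed

lemma sol_cube: "y \<in> solution_set N \<Longrightarrow> (\<And>k. k \<in> {1..int N} \<Longrightarrow> \<bar>y k\<bar> \<le> R) \<Longrightarrow> y \<in> cube N R"
  unfolding cube_def using sol_zero[of y N] by (auto simp: abs_le_iff) (smt (verit))

lemma min_on_sol:
  assumes c: "continuous_on UNIV J" and co: "coercive_on N J"
  shows "\<exists>y\<in>solution_set N. \<forall>z\<in>solution_set N. J y \<le> J z"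
proof -
  obtain R where R: "\<forall>y\<in>solution_set N. ynorm N y > R \<longrightarrow> J y > J (\<lambda>_. 0)"
    using co unfolding coercive_on_def by blast
  have z0: "(\<lambda>_. 0) \<in> cube N \<bar>R\<bar>" by (auto simp: cube_def)
  obtain y where y: "y \<in> cube N \<bar>R\<bar>" "\<forall>z\<in>cube N \<bar>R\<bar>. J y \<le> J z"
    using continuous_attains_inf[OF compact_cube, of N "\<bar>R\<bar>" J] z0 continuous_on_subset[OF c]
    by blast
  have "J y \<le> J z" if z: "z \<in> solution_set N" for z
  proof (cases "ynorm N z > R")
    case True
    then show ?thesis using R z y(2) z0 by force
  next
    case False
    have "z \<in> cube N \<bar>R\<bar>"
      by (rule sol_cube[OF z]) (use abs_le_ynorm[of _ N z] False in force)
    then show ?thesis using y by auto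
  qed
  then show ?thesis using y cube_sol by blast
qed

lemma S0_scale: "S0 N (\<lambda>k. c * y k) = c\<^sup>2 * S0 N y"
  by (simp add: S0_def power_mult_distrib sum_distrib_left)

lemma S0_cont: "continuous_on UNIV (S0 N)"
  unfolding S0_def by (intro continuous_intros continuous_on_product_coordinates)

lemma rayleigh:
  assumes N: "N \<ge> 1" and c: "continuous_on UNIV Q" and h: "\<And>c y. Q (\<lambda>k. c * y k) = c\<^sup>2 * Q y"
  shows "\<exists>y\<in>solution_set N. S0 N y = 1 \<and> (\<forall>z\<in>solution_set N. Q y * S0 N z \<le> Q z)"
proof -
  let ?K = "cube N 1 \<inter> {y. S0 N y = 1}"
  have "closed {y. S0 N y = 1}"
    by (rule closed_Collect_eq) (auto intro: S0_cont)
  then have cK: "compact ?K" by (rule compact_Int_closed[OF compact_cube])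
  let ?d = "\<lambda>k::int. if k = 1 then 1 else (0::real)"
  have e: "(\<lambda>k. (?d k)\<^sup>2) = ?d" by auto
  have "S0 N ?d = 1" using N unfolding S0_def e by (simp add: sum.delta)
  then have "?d \<in> ?K" using N by (auto simp: cube_def)
  then obtain y where y: "y \<in> ?K" "\<forall>z\<in>?K. Q y \<le> Q z"
    using continuous_attains_inf[OF cK, of Q] continuous_on_subset[OF c] by blast
  have "Q y * S0 N z \<le> Q z" if z: "z \<in> solution_set N" for z
  proof (cases "S0 N z = 0")
    case True
    have "z k = 0" if "k \<in> {1..int N}" for k
    proof -
      have "(z k)\<^sup>2 \<le> S0 N z" unfolding S0_def by (rule member_le_sum) (use that in auto)
      then show ?thesis using True by simp
    qed
    then have "z = (\<lambda>k. 0 * z k)"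
      using z by (auto simp: solution_set_def fun_eq_iff) (smt (verit) atLeastAtMost_iff)
    then have "Q z = 0" using h[of 0 z] by simp
    then show ?thesis using True by simp
  next
    case False
    have pos: "S0 N z > 0" using False unfolding S0_def by (metis less_eq_real_def sum_nonneg zero_le_power2)
    define w where "w = (\<lambda>k. (1 / sqrt (S0 N z)) * z k)"
    have Sw: "S0 N w = 1" unfolding w_def S0_scale using pos by (simp add: power_divide)
    have "w \<in> solution_set N" using z by (auto simp: w_def solution_set_def)
    moreover have "\<bar>w k\<bar> \<le> 1" if "k \<in> {1..int N}" for k
    proof -
      have "(w k)\<^sup>2 \<le> S0 N w" unfolding S0_def by (rule member_le_sum) (use that in auto)
      then show ?thesis using Sw abs_le_square_iff[of "w k" 1] by simp
    qed
    ultimately have "w \<in> ?K" using Sw by (auto intro: sol_cube)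
    then have "Q y \<le> Q w" using y by auto
    also have "Q w = Q z / S0 N z" unfolding w_def h using pos by (simp add: power_divide)
    finally show ?thesis using pos by (simp add: pos_le_divide_eq)
  qed
  then show ?thesis using y cube_sol by blast
qed

definition dl :: "int \<Rightarrow> int \<Rightarrow> real" where "dl j k = (if k = j then 1 else 0)"

lemma DD_lin: "\<Delta> (\<Delta> (\<lambda>i. y i + t * d i)) k = \<Delta> (\<Delta> y) k + t * \<Delta> (\<Delta> d) k"
  by (simp add: fwd_diff_def algebra_simps)

lemma D_lin: "\<Delta> (\<lambda>i. y i + t * d i) k = \<Delta> y k + t * \<Delta> d k"
  by (simp add: fwd_diff_def algebra_simps)

lemma deriv_quad: "((\<lambda>t. \<Sum>k\<in>I. c k * (a k + t * b k)\<^sup>2) has_real_derivative (\<Sum>k\<in>I. 2 * c k * a k * b k)) (at 0)"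
  by (rule DERIV_sum) (auto intro!: derivative_eq_intros)

lemma sum_dl: "finite I \<Longrightarrow> (\<Sum>k\<in>I. g k * dl a k) = (if a \<in> I then g a else 0)"
proof -
  assume "finite I"
  have "(\<Sum>k\<in>I. g k * dl a k) = (\<Sum>k\<in>I. if k = a then g k else 0)"
    by (rule sum.cong) (auto simp: dl_def)
  then show ?thesis using \<open>finite I\<close> by (simp add: sum.delta)
qed

lemma DDdl: "\<Delta> (\<Delta> (dl j)) (k - 2) = dl j k - 2 * dl (j+1) k + dl (j+2) k"
  by (auto simp: fwd_diff_def dl_def)

lemma Ddl: "\<Delta> (dl j) (k - 1) = dl j k - dl (j+1) k"
  by (auto simp: fwd_diff_def dl_def)

lemma close2:
  assumes "j \<in> {1..int N}"
  shows "(\<Sum>k=1..int N + 2. g k * \<Delta> (\<Delta> (dl j)) (k - 2)) = g j - 2 * g (j+1) + g (j+2)"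
proof -
  have "(\<Sum>k=1..int N + 2. g k * \<Delta> (\<Delta> (dl j)) (k - 2))
     = (\<Sum>k=1..int N + 2. g k * dl j k) - 2 * (\<Sum>k=1..int N + 2. g k * dl (j+1) k)
       + (\<Sum>k=1..int N + 2. g k * dl (j+2) k)"
    by (simp add: DDdl algebra_simps sum.distrib sum_subtractf sum_distrib_left)
  then show ?thesis using assms by (simp add: sum_dl)
qed

lemma close1:
  assumes "j \<in> {1..int N}"
  shows "(\<Sum>k=1..int N + 1. g k * \<Delta> (dl j) (k - 1)) = g j - g (j+1)"
proof -
  have "(\<Sum>k=1..int N + 1. g k * \<Delta> (dl j) (k - 1))
     = (\<Sum>k=1..int N + 1. g k * dl j k) - (\<Sum>k=1..int N + 1. g k * dl (j+1) k)"
    by (simp add: Ddl algebra_simps sum.distrib sum_subtractf sum_distrib_left)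
  then show ?thesis using assms by (simp add: sum_dl)
qed

lemma DD_eval: "\<Delta> (\<Delta> h) j = h (j+2) - 2 * h (j+1) + h j"
  by (simp add: fwd_diff_def algebra_simps)

lemma J_deriv:
  assumes c: "\<forall>k \<in> {1..int N}. continuous_on UNIV (f k)" and j: "j \<in> {1..int N}"
  shows "((\<lambda>t. Jfun N p q f (\<lambda>i. y i + t * dl j i)) has_real_derivative
     (\<Delta> (\<Delta> (\<lambda>i. p i * \<Delta> (\<Delta> y) (i - 2))) j
      + \<Delta> (\<lambda>i. q i * \<Delta> y (i - 1)) j + f j (y j))) (at 0)"
proof -
  have e: "Jfun N p q f (\<lambda>i. y i + t * dl j i) =
     (\<Sum>k=1..int N + 2. (p k / 2) * (\<Delta> (\<Delta> y) (k - 2) + t * \<Delta> (\<Delta> (dl j)) (k - 2))\<^sup>2)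
   - (\<Sum>k=1..int N + 1. (q k / 2) * (\<Delta> y (k - 1) + t * \<Delta> (dl j) (k - 1))\<^sup>2)
   + (\<Sum>k=1..int N. Fprim f k (y k + t * dl j k))" for t
    unfolding Jfun_def DD_lin D_lin ..
  have d3: "((\<lambda>t. \<Sum>k=1..int N. Fprim f k (y k + t * dl j k)) has_real_derivative
      (\<Sum>k=1..int N. f k (y k) * dl j k)) (at 0)"
  proof (rule DERIV_sum)
    fix k assume k: "k \<in> {1..int N}"
    have "((\<lambda>t. Fprim f k (y k + t * dl j k)) has_real_derivative f k (y k + 0 * dl j k) * dl j k) (at 0)"
      by (rule DERIV_chain2[OF Fprim_deriv[of f k]]) (use c k in \<open>auto intro!: derivative_eq_intros\<close>)
    then show "((\<lambda>t. Fprim f k (y k + t * dl j k)) has_real_derivative f k (y k) * dl j k) (at 0)"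
      by simp
  qed
  have "((\<lambda>t. Jfun N p q f (\<lambda>i. y i + t * dl j i)) has_real_derivative
     (\<Sum>k=1..int N + 2. 2 * (p k / 2) * \<Delta> (\<Delta> y) (k - 2) * \<Delta> (\<Delta> (dl j)) (k - 2))
   - (\<Sum>k=1..int N + 1. 2 * (q k / 2) * \<Delta> y (k - 1) * \<Delta> (dl j) (k - 1))
   + (\<Sum>k=1..int N. f k (y k) * dl j k)) (at 0)"
    unfolding e by (intro DERIV_add DERIV_diff deriv_quad d3)
  moreover have "(\<Sum>k=1..int N + 2. 2 * (p k / 2) * \<Delta> (\<Delta> y) (k - 2) * \<Delta> (\<Delta> (dl j)) (k - 2))
      = \<Delta> (\<Delta> (\<lambda>i. p i * \<Delta> (\<Delta> y) (i - 2))) j"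
  proof -
    have "(\<Sum>k=1..int N + 2. 2 * (p k / 2) * \<Delta> (\<Delta> y) (k - 2) * \<Delta> (\<Delta> (dl j)) (k - 2))
       = (\<Sum>k=1..int N + 2. (p k * \<Delta> (\<Delta> y) (k - 2)) * \<Delta> (\<Delta> (dl j)) (k - 2))"
      by (rule sum.cong) auto
    also have "\<dots> = p j * \<Delta> (\<Delta> y) (j - 2) - 2 * (p (j+1) * \<Delta> (\<Delta> y) (j + 1 - 2))
        + p (j+2) * \<Delta> (\<Delta> y) (j + 2 - 2)"
      by (rule close2[OF j, of "\<lambda>k. p k * \<Delta> (\<Delta> y) (k - 2)"])
    also have "\<dots> = \<Delta> (\<Delta> (\<lambda>i. p i * \<Delta> (\<Delta> y) (i - 2))) j"
      unfolding DD_eval[of "\<lambda>i. p i * \<Delta> (\<Delta> y) (i - 2)" j] by simp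
    finally show ?thesis .
  qed
  moreover have "(\<Sum>k=1..int N + 1. 2 * (q k / 2) * \<Delta> y (k - 1) * \<Delta> (dl j) (k - 1))
      = - \<Delta> (\<lambda>i. q i * \<Delta> y (i - 1)) j"
    using close1[OF j, of "\<lambda>k. q k * \<Delta> y (k - 1)"] by (simp add: fwd_diff_def)
  moreover have "(\<Sum>k=1..int N. f k (y k) * dl j k) = f j (y j)"
    using j by (simp add: sum_dl)
  ultimately have "((\<lambda>t. Jfun N p q f (\<lambda>i. y i + t * dl j i)) has_real_derivative
     (\<Delta> (\<Delta> (\<lambda>i. p i * \<Delta> (\<Delta> y) (i - 2))) j
      - (- \<Delta> (\<lambda>i. q i * \<Delta> y (i - 1)) j) + f j (y j))) (at 0)"
    by (simp only:)
  then show ?thesis by (simp only: diff_minus_eq_add)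
qed

definition Q2 :: "nat \<Rightarrow> (int \<Rightarrow> real) \<Rightarrow> real" where
  "Q2 N y = (\<Sum>k=1..int N + 2. (\<Delta> (\<Delta> y) (k - 2))\<^sup>2)"

definition Q1 :: "nat \<Rightarrow> (int \<Rightarrow> real) \<Rightarrow> real" where
  "Q1 N y = (\<Sum>k=1..int N + 1. (\<Delta> y (k - 1))\<^sup>2)"

lemma sq_diff_le: "((a::real) - b)\<^sup>2 \<le> 2 * a\<^sup>2 + 2 * b\<^sup>2"
proof -
  have "(a - b)\<^sup>2 = a\<^sup>2 - 2*a*b + b\<^sup>2" "(a + b)\<^sup>2 = a\<^sup>2 + 2*a*b + b\<^sup>2"
    by (simp_all add: power2_diff power2_sum)
  moreover have "0 \<le> (a + b)\<^sup>2" by simp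
  ultimately show ?thesis by linarith
qed

lemma sum_shift_gen:
  fixes h :: "int \<Rightarrow> real"
  assumes z: "\<And>k. k \<notin> {lo..hi} \<Longrightarrow> h k = 0" and "a - c \<le> lo" "hi \<le> b - c"
  shows "(\<Sum>k=a..b. h (k - c)) = (\<Sum>k=lo..hi. h k)"
proof -
  have "(\<Sum>k=a..b. h (k - c)) = (\<Sum>k\<in>(\<lambda>k. k - c) ` {a..b}. h k)"
    by (subst sum.reindex) (auto simp: inj_on_def)
  also have "(\<lambda>k. k - c) ` {a..b} = {a - c..b - c}"
  proof
    show "{a - c..b - c} \<subseteq> (\<lambda>k. k - c) ` {a..b}"
    proof
      fix x assume "x \<in> {a - c..b - c}"
      then show "x \<in> (\<lambda>k. k - c) ` {a..b}" by (intro image_eqI[of _ _ "x + c"]) auto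
    qed
  qed auto
  also have "(\<Sum>k\<in>{a - c..b - c}. h k) = (\<Sum>k=lo..hi. h k)"
    by (rule sum.mono_neutral_right) (use assms in auto)
  finally show ?thesis .
qed

lemma Q1_le: assumes y: "y \<in> solution_set N" shows "Q1 N y \<le> 4 * S0 N y"
proof -
  have "Q1 N y \<le> (\<Sum>k=1..int N + 1. 2 * (y k)\<^sup>2 + 2 * (y (k - 1))\<^sup>2)"
    unfolding Q1_def
  proof (rule sum_mono)
    fix k :: int
    have "(\<Delta> y (k - 1))\<^sup>2 = (y k - y (k - 1))\<^sup>2" by (simp add: fwd_diff_def)
    also have "\<dots> \<le> 2 * (y k)\<^sup>2 + 2 * (y (k - 1))\<^sup>2"
      by (rule sq_diff_le)
    finally show "(\<Delta> y (k - 1))\<^sup>2 \<le> 2 * (y k)\<^sup>2 + 2 * (y (k - 1))\<^sup>2" .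
  qed
  also have "\<dots> = 2 * (\<Sum>k=1..int N + 1. (y (k - 0))\<^sup>2) + 2 * (\<Sum>k=1..int N + 1. (y (k - 1))\<^sup>2)"
    by (simp add: sum.distrib sum_distrib_left)
  also have "(\<Sum>k=1..int N + 1. (y (k - 0))\<^sup>2) = S0 N y"
    unfolding S0_def by (rule sum_shift_gen[where h="\<lambda>k. (y k)\<^sup>2"]) (auto simp: sol_zero[OF y])
  also have "(\<Sum>k=1..int N + 1. (y (k - 1))\<^sup>2) = S0 N y"
    unfolding S0_def by (rule sum_shift_gen[where h="\<lambda>k. (y k)\<^sup>2"]) (auto simp: sol_zero[OF y])
  finally show ?thesis by simp
qed

lemma Dy_zero: assumes y: "y \<in> solution_set N" and k: "k \<notin> {0..int N}" shows "\<Delta> y k = 0"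
proof -
  have "k + 1 \<notin> {1..int N}" "k \<notin> {1..int N}" using k by auto
  then show ?thesis using sol_zero[OF y] by (simp add: fwd_diff_def)
qed

lemma Q2_le: assumes y: "y \<in> solution_set N" shows "Q2 N y \<le> 4 * Q1 N y"
proof -
  have "Q2 N y \<le> (\<Sum>k=1..int N + 2. 2 * (\<Delta> y (k - 1))\<^sup>2 + 2 * (\<Delta> y (k - 2))\<^sup>2)"
    unfolding Q2_def
  proof (rule sum_mono)
    fix k :: int
    have "\<Delta> (\<Delta> y) (k - 2) = \<Delta> y (k - 1) - \<Delta> y (k - 2)" by (simp add: fwd_diff_def)
    then have "(\<Delta> (\<Delta> y) (k - 2))\<^sup>2 = (\<Delta> y (k - 1) - \<Delta> y (k - 2))\<^sup>2" by simp
    also have "\<dots> \<le> 2 * (\<Delta> y (k - 1))\<^sup>2 + 2 * (\<Delta> y (k - 2))\<^sup>2"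
      by (rule sq_diff_le)
    finally show "(\<Delta> (\<Delta> y) (k - 2))\<^sup>2 \<le> 2 * (\<Delta> y (k - 1))\<^sup>2 + 2 * (\<Delta> y (k - 2))\<^sup>2" .
  qed
  also have "\<dots> = 2 * (\<Sum>k=1..int N + 2. (\<Delta> y (k - 1))\<^sup>2) + 2 * (\<Sum>k=1..int N + 2. (\<Delta> y (k - 2))\<^sup>2)"
    by (simp add: sum.distrib sum_distrib_left)
  also have "(\<Sum>k=1..int N + 2. (\<Delta> y (k - 1))\<^sup>2) = (\<Sum>k=0..int N. (\<Delta> y k)\<^sup>2)"
    by (rule sum_shift_gen[where h="\<lambda>k. (\<Delta> y k)\<^sup>2"]) (auto simp: Dy_zero[OF y])
  also have "(\<Sum>k=1..int N + 2. (\<Delta> y (k - 2))\<^sup>2) = (\<Sum>k=0..int N. (\<Delta> y k)\<^sup>2)"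
    by (rule sum_shift_gen[where h="\<lambda>k. (\<Delta> y k)\<^sup>2"]) (auto simp: Dy_zero[OF y])
  also have "Q1 N y = (\<Sum>k=0..int N. (\<Delta> y k)\<^sup>2)"
    unfolding Q1_def by (rule sum_shift_gen[where h="\<lambda>k. (\<Delta> y k)\<^sup>2"]) (auto simp: Dy_zero[OF y])
  ultimately show ?thesis by simp
qed

lemma DD_scale: "\<Delta> (\<Delta> (\<lambda>k. c * y k)) i = c * \<Delta> (\<Delta> y) i"
  by (simp add: fwd_diff_def algebra_simps)
lemma D_scale: "\<Delta> (\<lambda>k. c * y k) i = c * \<Delta> y i"
  by (simp add: fwd_diff_def algebra_simps)

lemma Q2_scale: "Q2 N (\<lambda>k. c * y k) = c\<^sup>2 * Q2 N y"
  by (simp add: Q2_def DD_scale power_mult_distrib sum_distrib_left)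
lemma Q1_scale: "Q1 N (\<lambda>k. c * y k) = c\<^sup>2 * Q1 N y"
  by (simp add: Q1_def D_scale power_mult_distrib sum_distrib_left)

lemma Q2_cont: "continuous_on UNIV (Q2 N)"
  unfolding Q2_def fwd_diff_def by (intro continuous_intros continuous_on_product_coordinates)
lemma Q1_cont: "continuous_on UNIV (Q1 N)"
  unfolding Q1_def fwd_diff_def by (intro continuous_intros continuous_on_product_coordinates)

lemma S0_pert: "S0 N (\<lambda>i. y i + t * dl j i) = (\<Sum>k=1..int N. 1 * (y k + t * dl j k)\<^sup>2)"
  by (simp add: S0_def)

lemma Q2_pert: "Q2 N (\<lambda>i. y i + t * dl j i) =
  (\<Sum>k=1..int N + 2. 1 * (\<Delta> (\<Delta> y) (k - 2) + t * \<Delta> (\<Delta> (dl j)) (k - 2))\<^sup>2)"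
  by (simp add: Q2_def DD_lin)

lemma Q1_pert: "Q1 N (\<lambda>i. y i + t * dl j i) =
  (\<Sum>k=1..int N + 1. 1 * (\<Delta> y (k - 1) + t * \<Delta> (dl j) (k - 1))\<^sup>2)"
  by (simp add: Q1_def D_lin)

lemma pert_sol: "y \<in> solution_set N \<Longrightarrow> j \<in> {1..int N} \<Longrightarrow> (\<lambda>i. y i + t * dl j i) \<in> solution_set N"
  by (auto simp: solution_set_def dl_def)

lemma stat2:
  assumes y: "y \<in> solution_set N" and S: "S0 N y = 1"
    and mn: "\<forall>z\<in>solution_set N. Q2 N y * S0 N z \<le> Q2 N z" and j: "j \<in> {1..int N}"
  shows "\<Delta> (\<Delta> y) (j - 2) - 2 * \<Delta> (\<Delta> y) (j + 1 - 2) + \<Delta> (\<Delta> y) (j + 2 - 2) = Q2 N y * y j"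
proof -
  define \<mu> where "\<mu> = Q2 N y"
  define g where "g t = Q2 N (\<lambda>i. y i + t * dl j i) - \<mu> * S0 N (\<lambda>i. y i + t * dl j i)" for t
  have d: "(g has_real_derivative
     (\<Sum>k=1..int N + 2. 2 * 1 * \<Delta> (\<Delta> y) (k - 2) * \<Delta> (\<Delta> (dl j)) (k - 2))
     - \<mu> * (\<Sum>k=1..int N. 2 * 1 * y k * dl j k)) (at 0)"
    unfolding g_def Q2_pert S0_pert by (intro DERIV_diff DERIV_cmult deriv_quad)
  have "g 0 \<le> g t" for t
  proof -
    have "g 0 = 0" using S by (simp add: g_def \<mu>_def)
    moreover have "\<mu> * S0 N (\<lambda>i. y i + t * dl j i) \<le> Q2 N (\<lambda>i. y i + t * dl j i)"
      using mn pert_sol[OF y j] unfolding \<mu>_def by blast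
    ultimately show ?thesis by (simp add: g_def)
  qed
  then have "(\<Sum>k=1..int N + 2. 2 * 1 * \<Delta> (\<Delta> y) (k - 2) * \<Delta> (\<Delta> (dl j)) (k - 2))
     - \<mu> * (\<Sum>k=1..int N. 2 * 1 * y k * dl j k) = 0"
    using DERIV_local_min[OF d, of 1] by auto
  moreover have "(\<Sum>k=1..int N + 2. 2 * 1 * \<Delta> (\<Delta> y) (k - 2) * \<Delta> (\<Delta> (dl j)) (k - 2))
     = (\<Sum>k=1..int N + 2. (2 * \<Delta> (\<Delta> y) (k - 2)) * \<Delta> (\<Delta> (dl j)) (k - 2))"
    by simp
  moreover note close2[OF j, of "\<lambda>k. 2 * \<Delta> (\<Delta> y) (k - 2)"]
  moreover have "(\<Sum>k=1..int N. 2 * 1 * y k * dl j k) = 2 * y j"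
    using j by (simp add: sum_dl)
  ultimately have "2 * \<Delta> (\<Delta> y) (j - 2) - 2 * (2 * \<Delta> (\<Delta> y) (j + 1 - 2)) + 2 * \<Delta> (\<Delta> y) (j + 2 - 2)
     - \<mu> * (2 * y j) = 0" by simp
  moreover have "\<mu> * (2 * y j) = 2 * (\<mu> * y j)" by simp
  ultimately show ?thesis unfolding \<mu>_def by linarith
qed

lemma stat1:
  assumes y: "y \<in> solution_set N" and S: "S0 N y = 1"
    and mn: "\<forall>z\<in>solution_set N. Q1 N y * S0 N z \<le> Q1 N z" and j: "j \<in> {1..int N}"
  shows "\<Delta> y (j - 1) - \<Delta> y (j + 1 - 1) = Q1 N y * y j"
proof -
  define \<mu> where "\<mu> = Q1 N y"
  define g where "g t = Q1 N (\<lambda>i. y i + t * dl j i) - \<mu> * S0 N (\<lambda>i. y i + t * dl j i)" for t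
  have d: "(g has_real_derivative
     (\<Sum>k=1..int N + 1. 2 * 1 * \<Delta> y (k - 1) * \<Delta> (dl j) (k - 1))
     - \<mu> * (\<Sum>k=1..int N. 2 * 1 * y k * dl j k)) (at 0)"
    unfolding g_def Q1_pert S0_pert by (intro DERIV_diff DERIV_cmult deriv_quad)
  have "g 0 \<le> g t" for t
  proof -
    have "g 0 = 0" using S by (simp add: g_def \<mu>_def)
    moreover have "\<mu> * S0 N (\<lambda>i. y i + t * dl j i) \<le> Q1 N (\<lambda>i. y i + t * dl j i)"
      using mn pert_sol[OF y j] unfolding \<mu>_def by blast
    ultimately show ?thesis by (simp add: g_def)
  qed
  then have "(\<Sum>k=1..int N + 1. 2 * 1 * \<Delta> y (k - 1) * \<Delta> (dl j) (k - 1))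
     - \<mu> * (\<Sum>k=1..int N. 2 * 1 * y k * dl j k) = 0"
    using DERIV_local_min[OF d, of 1] by auto
  moreover have "(\<Sum>k=1..int N + 1. 2 * 1 * \<Delta> y (k - 1) * \<Delta> (dl j) (k - 1))
     = (\<Sum>k=1..int N + 1. (2 * \<Delta> y (k - 1)) * \<Delta> (dl j) (k - 1))"
    by simp
  moreover note close1[OF j, of "\<lambda>k. 2 * \<Delta> y (k - 1)"]
  moreover have "(\<Sum>k=1..int N. 2 * 1 * y k * dl j k) = 2 * y j"
    using j by (simp add: sum_dl)
  ultimately have "2 * \<Delta> y (j - 1) - 2 * \<Delta> y (j + 1 - 1) - \<mu> * (2 * y j) = 0" by simp
  moreover have "\<mu> * (2 * y j) = 2 * (\<mu> * y j)" by simp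
  ultimately show ?thesis unfolding \<mu>_def by linarith
qed

lemma sum_nat_ind:
  fixes h :: "nat \<Rightarrow> real"
  shows "(\<Sum>c\<in>{0..<N}. (if c + d = r then 1 else 0) * h c) = (if d \<le> r \<and> r < N + d then h (r - d) else 0)"
proof -
  have "(\<Sum>c\<in>{0..<N}. (if c + d = r then 1 else 0) * h c) = (\<Sum>c\<in>{0..<N}. if c = r - d then (if d \<le> r then h c else 0) else 0)"
    by (rule sum.cong) auto
  also have "\<dots> = (if d \<le> r \<and> r < N + d then h (r - d) else 0)"
    by (subst sum.delta) auto
  finally show ?thesis .
qed

lemma sum_nat_ind':
  fixes h :: "nat \<Rightarrow> real"
  shows "(\<Sum>r\<in>{0..<M}. (if c + d = r then 1 else 0) * h r) = (if c + d < M then h (c + d) else 0)"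
proof -
  have "(\<Sum>r\<in>{0..<M}. (if c + d = r then 1 else 0) * h r) = (\<Sum>r\<in>{0..<M}. if c + d = r then h r else 0)"
    by (rule sum.cong) auto
  also have "\<dots> = (if c + d < M then h (c + d) else 0)"
    by (subst sum.delta') auto
  finally show ?thesis .
qed

lemma sum3: "(\<Sum>r\<in>A. f r - 2 * g r + h r) = sum f A - 2 * sum g A + sum (h::_\<Rightarrow>real) A"
  by (simp add: sum.distrib sum_subtractf sum_distrib_left)

lemma Wmat_carrier: "Wmat N \<in> carrier_mat (N + 2) N" by (simp add: Wmat_def)
lemma Vmat_carrier: "Vmat N \<in> carrier_mat (N + 1) N" by (simp add: Vmat_def)

lemma Wv:
  assumes y: "y \<in> solution_set N" and r: "r < N + 2"
  shows "(Wmat N *\<^sub>v vec N (\<lambda>i. y (int i + 1))) $ r = \<Delta> (\<Delta> y) (int r - 1)"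
proof -
  let ?h = "\<lambda>i. y (int i + 1)"
  have "(Wmat N *\<^sub>v vec N ?h) $ r = (\<Sum>c\<in>{0..<N}. (Wmat N $$ (r, c)) * ?h c)"
    using r by (simp add: Wmat_def scalar_prod_def)
  also have "\<dots> = (\<Sum>c\<in>{0..<N}. (if c + 0 = r then 1 else 0) * ?h c)
      - 2 * (\<Sum>c\<in>{0..<N}. (if c + 1 = r then 1 else 0) * ?h c)
      + (\<Sum>c\<in>{0..<N}. (if c + 2 = r then 1 else 0) * ?h c)"
    using r by (simp add: Wmat_def sum.distrib sum_subtractf sum_distrib_left algebra_simps)
  also have "\<dots> = y (int r + 1) - 2 * y (int r) + y (int r - 1)"
  proof -
    have t1: "(if 0 \<le> r \<and> r < N + 0 then ?h (r - 0) else 0) = y (int r + 1)"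
      using sol_zero[OF y, of "int r + 1"] by auto
    have t2: "(if 1 \<le> r \<and> r < N + 1 then ?h (r - 1) else 0) = y (int r)"
      using sol_zero[OF y, of "int r"] r by (auto simp: of_nat_diff)
    have t3: "(if 2 \<le> r \<and> r < N + 2 then ?h (r - 2) else 0) = y (int r - 1)"
      using sol_zero[OF y, of "int r - 1"] r by (auto simp: of_nat_diff)
    show ?thesis unfolding sum_nat_ind t1 t2 t3 ..
  qed
  also have "\<dots> = \<Delta> (\<Delta> y) (int r - 1)" by (simp add: fwd_diff_def)
  finally show ?thesis .
qed

lemma WTu:
  assumes u: "u \<in> carrier_vec (N + 2)" and c: "c < N"
  shows "(transpose_mat (Wmat N) *\<^sub>v u) $ c = u $ c - 2 * u $ (c + 1) + u $ (c + 2)"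
proof -
  have "(transpose_mat (Wmat N) *\<^sub>v u) $ c = (\<Sum>r\<in>{0..<N+2}. (Wmat N $$ (r, c)) * u $ r)"
    using c u by (simp add: Wmat_def scalar_prod_def)
  also have "\<dots> = (\<Sum>r\<in>{0..<N+2}. (if c + 0 = r then 1 else 0) * u $ r)
      - 2 * (\<Sum>r\<in>{0..<N+2}. (if c + 1 = r then 1 else 0) * u $ r)
      + (\<Sum>r\<in>{0..<N+2}. (if c + 2 = r then 1 else 0) * u $ r)"
  proof -
    have "(\<Sum>r\<in>{0..<N+2}. (Wmat N $$ (r, c)) * u $ r) =
      (\<Sum>r\<in>{0..<N+2}. (if c + 0 = r then 1 else 0) * u $ r
       - 2 * ((if c + 1 = r then 1 else 0) * u $ r) + (if c + 2 = r then 1 else 0) * u $ r)"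
      by (rule sum.cong) (use c in \<open>auto simp: Wmat_def\<close>)
    then show ?thesis by (simp only: sum3)
  qed
  also have "\<dots> = u $ c - 2 * u $ (c + 1) + u $ (c + 2)"
    unfolding sum_nat_ind' using c by simp
  finally show ?thesis .
qed

lemma Vv:
  assumes y: "y \<in> solution_set N" and r: "r < N + 1"
  shows "(Vmat N *\<^sub>v vec N (\<lambda>i. y (int i + 1))) $ r = \<Delta> y (int r)"
proof -
  let ?h = "\<lambda>i. y (int i + 1)"
  have "(Vmat N *\<^sub>v vec N ?h) $ r = (\<Sum>c\<in>{0..<N}. (Vmat N $$ (r, c)) * ?h c)"
    using r by (simp add: Vmat_def scalar_prod_def)
  also have "\<dots> = (\<Sum>c\<in>{0..<N}. (if c + 0 = r then 1 else 0) * ?h c - (if c + 1 = r then 1 else 0) * ?h c)"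
    by (rule sum.cong) (use r in \<open>auto simp: Vmat_def\<close>)
  also have "\<dots> = (\<Sum>c\<in>{0..<N}. (if c + 0 = r then 1 else 0) * ?h c)
      - (\<Sum>c\<in>{0..<N}. (if c + 1 = r then 1 else 0) * ?h c)"
    by (rule sum_subtractf)
  also have "\<dots> = y (int r + 1) - y (int r)"
  proof -
    have t1: "(if 0 \<le> r \<and> r < N + 0 then ?h (r - 0) else 0) = y (int r + 1)"
      using sol_zero[OF y, of "int r + 1"] by auto
    have t2: "(if 1 \<le> r \<and> r < N + 1 then ?h (r - 1) else 0) = y (int r)"
      using sol_zero[OF y, of "int r"] r by (auto simp: of_nat_diff)
    show ?thesis unfolding sum_nat_ind t1 t2 ..
  qed
  also have "\<dots> = \<Delta> y (int r)" by (simp add: fwd_diff_def)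
  finally show ?thesis .
qed

lemma VTu:
  assumes u: "u \<in> carrier_vec (N + 1)" and c: "c < N"
  shows "(transpose_mat (Vmat N) *\<^sub>v u) $ c = u $ c - u $ (c + 1)"
proof -
  have "(transpose_mat (Vmat N) *\<^sub>v u) $ c = (\<Sum>r\<in>{0..<N+1}. (Vmat N $$ (r, c)) * u $ r)"
    using c u by (simp add: Vmat_def scalar_prod_def)
  also have "\<dots> = (\<Sum>r\<in>{0..<N+1}. (if c + 0 = r then 1 else 0) * u $ r - (if c + 1 = r then 1 else 0) * u $ r)"
    by (rule sum.cong) (use c in \<open>auto simp: Vmat_def\<close>)
  also have "\<dots> = (\<Sum>r\<in>{0..<N+1}. (if c + 0 = r then 1 else 0) * u $ r)
      - (\<Sum>r\<in>{0..<N+1}. (if c + 1 = r then 1 else 0) * u $ r)"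
    by (rule sum_subtractf)
  also have "\<dots> = u $ c - u $ (c + 1)"
    unfolding sum_nat_ind' using c by simp
  finally show ?thesis .
qed

lemma eig_finite:
  fixes A :: "real mat"
  assumes A: "A \<in> carrier_mat n n"
  shows "finite {l. eigenvalue A l}"
proof -
  have "char_poly A \<noteq> 0" using degree_monic_char_poly[OF A] by auto
  then have "finite {l. poly (char_poly A) l = 0}" by (rule poly_roots_finite)
  then show ?thesis using eigenvalue_root_char_poly[OF A] by simp
qed

lemma vec_nz:
  assumes S: "S0 N y = 1"
  shows "vec N (\<lambda>i. y (int i + 1)) \<noteq> 0\<^sub>v N"
proof
  assume z: "vec N (\<lambda>i. y (int i + 1)) = 0\<^sub>v N"
  have "y k = 0" if k: "k \<in> {1..int N}" for k
  proof -
    have "nat k - 1 < N" using k by auto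
    then have "vec N (\<lambda>i. y (int i + 1)) $ (nat k - 1) = 0" using z by simp
    moreover have "int (nat k - 1) + 1 = k" using k by auto
    ultimately show ?thesis using \<open>nat k - 1 < N\<close> by simp
  qed
  then have "S0 N y = 0" unfolding S0_def by simp
  then show False using S by simp
qed

lemma eig2:
  assumes y: "y \<in> solution_set N" and S: "S0 N y = 1"
    and mn: "\<forall>z\<in>solution_set N. Q2 N y * S0 N z \<le> Q2 N z"
  shows "eigenvalue (transpose_mat (Wmat N) * Wmat N) (Q2 N y)"
proof -
  let ?v = "vec N (\<lambda>i. y (int i + 1))"
  let ?A = "transpose_mat (Wmat N) * Wmat N"
  let ?u = "Wmat N *\<^sub>v ?v"
  have vc: "?v \<in> carrier_vec N" by simp
  have uc: "?u \<in> carrier_vec (N + 2)" using Wmat_carrier[of N] by simp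
  have As: "?A *\<^sub>v ?v = transpose_mat (Wmat N) *\<^sub>v ?u"
    by (rule assoc_mult_mat_vec[OF _ Wmat_carrier vc]) (use Wmat_carrier[of N] in auto)
  have "?A *\<^sub>v ?v = Q2 N y \<cdot>\<^sub>v ?v"
  proof (rule eq_vecI)
    show "dim_vec (?A *\<^sub>v ?v) = dim_vec (Q2 N y \<cdot>\<^sub>v ?v)" by (simp add: Wmat_def)
    fix c assume "c < dim_vec (Q2 N y \<cdot>\<^sub>v ?v)"
    then have c: "c < N" by simp
    have "(?A *\<^sub>v ?v) $ c = ?u $ c - 2 * ?u $ (c + 1) + ?u $ (c + 2)"
      unfolding As by (rule WTu[OF uc c])
    also have "\<dots> = \<Delta> (\<Delta> y) (int c - 1) - 2 * \<Delta> (\<Delta> y) (int (c + 1) - 1) + \<Delta> (\<Delta> y) (int (c + 2) - 1)"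
      using c by (simp add: Wv[OF y])
    also have "\<dots> = Q2 N y * y (int c + 1)"
      using stat2[OF y S mn, of "int c + 1"] c by (simp add: algebra_simps)
    finally show "(?A *\<^sub>v ?v) $ c = (Q2 N y \<cdot>\<^sub>v ?v) $ c" using c by simp
  qed
  then show ?thesis unfolding eigenvalue_def eigenvector_def
    using vec_nz[OF S] by (intro exI[of _ ?v]) (simp add: Wmat_def)
qed

lemma eig1:
  assumes y: "y \<in> solution_set N" and S: "S0 N y = 1"
    and mn: "\<forall>z\<in>solution_set N. Q1 N y * S0 N z \<le> Q1 N z"
  shows "eigenvalue (transpose_mat (Vmat N) * Vmat N) (Q1 N y)"
proof -
  let ?v = "vec N (\<lambda>i. y (int i + 1))"
  let ?A = "transpose_mat (Vmat N) * Vmat N"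
  let ?u = "Vmat N *\<^sub>v ?v"
  have vc: "?v \<in> carrier_vec N" by simp
  have uc: "?u \<in> carrier_vec (N + 1)" using Vmat_carrier[of N] by simp
  have As: "?A *\<^sub>v ?v = transpose_mat (Vmat N) *\<^sub>v ?u"
    by (rule assoc_mult_mat_vec[OF _ Vmat_carrier vc]) (use Vmat_carrier[of N] in auto)
  have "?A *\<^sub>v ?v = Q1 N y \<cdot>\<^sub>v ?v"
  proof (rule eq_vecI)
    show "dim_vec (?A *\<^sub>v ?v) = dim_vec (Q1 N y \<cdot>\<^sub>v ?v)" by (simp add: Vmat_def)
    fix c assume "c < dim_vec (Q1 N y \<cdot>\<^sub>v ?v)"
    then have c: "c < N" by simp
    have "(?A *\<^sub>v ?v) $ c = ?u $ c - ?u $ (c + 1)"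
      unfolding As by (rule VTu[OF uc c])
    also have "\<dots> = \<Delta> y (int c) - \<Delta> y (int (c + 1))"
      using c by (simp add: Vv[OF y])
    also have "\<dots> = Q1 N y * y (int c + 1)"
      using stat1[OF y S mn, of "int c + 1"] c by (simp add: algebra_simps)
    finally show "(?A *\<^sub>v ?v) $ c = (Q1 N y \<cdot>\<^sub>v ?v) $ c" using c by simp
  qed
  then show ?thesis unfolding eigenvalue_def eigenvector_def
    using vec_nz[OF S] by (intro exI[of _ ?v]) (simp add: Vmat_def)
qed

lemma Q2_ge:
  assumes N: "N \<ge> 1" and z: "z \<in> solution_set N"
  shows "lambda2 N * S0 N z \<le> Q2 N z"
proof -
  obtain y where y: "y \<in> solution_set N" "S0 N y = 1" "\<forall>z\<in>solution_set N. Q2 N y * S0 N z \<le> Q2 N z"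
    using rayleigh[OF N Q2_cont Q2_scale] by blast
  have e: "eigenvalue (transpose_mat (Wmat N) * Wmat N) (Q2 N y)" by (rule eig2[OF y])
  have "transpose_mat (Wmat N) * Wmat N \<in> carrier_mat N N"
    by (metis Wmat_carrier mult_carrier_mat transpose_carrier_mat)
  then have "lambda2 N \<le> Q2 N y"
    unfolding lambda2_def smallest_eigenvalue_def using e by (intro Min_le eig_finite) auto
  moreover have "S0 N z \<ge> 0" unfolding S0_def by (simp add: sum_nonneg)
  ultimately have "lambda2 N * S0 N z \<le> Q2 N y * S0 N z" by (rule mult_right_mono)
  also have "\<dots> \<le> Q2 N z" using y(3) z by blast
  finally show ?thesis .
qed

lemma Q1_ge:
  assumes N: "N \<ge> 1" and z: "z \<in> solution_set N"
  shows "lambda1 N * S0 N z \<le> Q1 N z"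
proof -
  obtain y where y: "y \<in> solution_set N" "S0 N y = 1" "\<forall>z\<in>solution_set N. Q1 N y * S0 N z \<le> Q1 N z"
    using rayleigh[OF N Q1_cont Q1_scale] by blast
  have e: "eigenvalue (transpose_mat (Vmat N) * Vmat N) (Q1 N y)" by (rule eig1[OF y])
  have "transpose_mat (Vmat N) * Vmat N \<in> carrier_mat N N"
    by (metis Vmat_carrier mult_carrier_mat transpose_carrier_mat)
  then have "lambda1 N \<le> Q1 N y"
    unfolding lambda1_def smallest_eigenvalue_def using e by (intro Min_le eig_finite) auto
  moreover have "S0 N z \<ge> 0" unfolding S0_def by (simp add: sum_nonneg)
  ultimately have "lambda1 N * S0 N z \<le> Q1 N y * S0 N z" by (rule mult_right_mono)
  also have "\<dots> \<le> Q1 N z" using y(3) z by blast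
  finally show ?thesis .
qed

lemma J_cont:
  assumes c: "\<forall>k \<in> {1..int N}. continuous_on UNIV (f k)"
  shows "continuous_on UNIV (Jfun N p q f)"
proof -
  have "continuous_on UNIV (\<lambda>y. \<Sum>k=1..int N. Fprim f k (y k))"
  proof (rule continuous_on_sum)
    fix k assume k: "k \<in> {1..int N}"
    show "continuous_on UNIV (\<lambda>y. Fprim f k (y k))"
      by (rule continuous_on_compose2[OF Fprim_cont[of f k] continuous_on_product_coordinates])
         (use c k in auto)
  qed
  moreover have "continuous_on UNIV (\<lambda>y. \<Sum>k=1..int N + 2. p k / 2 * (\<Delta> (\<Delta> y) (k - 2))\<^sup>2)"
    unfolding fwd_diff_def by (intro continuous_intros continuous_on_product_coordinates)
  moreover have "continuous_on UNIV (\<lambda>y. \<Sum>k=1..int N + 1. q k / 2 * (\<Delta> y (k - 1))\<^sup>2)"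
    unfolding fwd_diff_def by (intro continuous_intros continuous_on_product_coordinates)
  ultimately show ?thesis
    unfolding Jfun_def by (intro continuous_on_add continuous_on_diff)
qed

lemma J_lower:
  assumes N: "N \<ge> 1" and y: "y \<in> solution_set N"
    and C: "\<forall>k\<in>{1..int N}. \<forall>s. Cf k \<le> Fprim f k s"
  shows "(eta' N p * pmin N p - eta N q * qmax N q) / 2 * S0 N y + (\<Sum>k=1..int N. Cf k) \<le> Jfun N p q f y"
proof -
  have S0: "S0 N y \<ge> 0" unfolding S0_def by (simp add: sum_nonneg)
  have t1: "pmin N p / 2 * Q2 N y \<le> (\<Sum>k=1..int N + 2. p k / 2 * (\<Delta> (\<Delta> y) (k - 2))\<^sup>2)"
    unfolding Q2_def sum_distrib_left
  proof (rule sum_mono)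
    fix k assume k: "k \<in> {1..int N + 2}"
    have "pmin N p \<le> p k" unfolding pmin_def using k by (intro Min_le) auto
    then show "pmin N p / 2 * (\<Delta> (\<Delta> y) (k - 2))\<^sup>2 \<le> p k / 2 * (\<Delta> (\<Delta> y) (k - 2))\<^sup>2"
      by (intro mult_right_mono) auto
  qed
  have t2: "(\<Sum>k=1..int N + 1. q k / 2 * (\<Delta> y (k - 1))\<^sup>2) \<le> qmax N q / 2 * Q1 N y"
    unfolding Q1_def sum_distrib_left
  proof (rule sum_mono)
    fix k assume k: "k \<in> {1..int N + 1}"
    have "q k \<le> qmax N q" unfolding qmax_def using k by (intro Max_ge) auto
    then show "q k / 2 * (\<Delta> y (k - 1))\<^sup>2 \<le> qmax N q / 2 * (\<Delta> y (k - 1))\<^sup>2"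
      by (intro mult_right_mono) auto
  qed
  have t3: "(\<Sum>k=1..int N. Cf k) \<le> (\<Sum>k=1..int N. Fprim f k (y k))"
    by (rule sum_mono) (use C in auto)
  have u1: "eta' N p * pmin N p * S0 N y \<le> pmin N p * Q2 N y"
  proof (cases "pmin N p \<ge> 0")
    case True
    then have "pmin N p * (lambda2 N * S0 N y) \<le> pmin N p * Q2 N y"
      using Q2_ge[OF N y] by (intro mult_left_mono)
    then show ?thesis using True by (simp add: eta'_def mult.assoc mult.left_commute)
  next
    case False
    have "Q2 N y \<le> 16 * S0 N y" using Q2_le[OF y] Q1_le[OF y] by linarith
    then have "pmin N p * (16 * S0 N y) \<le> pmin N p * Q2 N y"
      using False by (intro mult_left_mono_neg) auto
    then show ?thesis using False by (simp add: eta'_def mult.assoc mult.left_commute)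
  qed
  have u2: "qmax N q * Q1 N y \<le> eta N q * qmax N q * S0 N y"
  proof (cases "qmax N q < 0")
    case True
    then have "qmax N q * Q1 N y \<le> qmax N q * (lambda1 N * S0 N y)"
      using Q1_ge[OF N y] by (intro mult_left_mono_neg) auto
    then show ?thesis using True by (simp add: eta_def mult.assoc mult.left_commute)
  next
    case False
    then have "qmax N q * Q1 N y \<le> qmax N q * (4 * S0 N y)"
      using Q1_le[OF y] by (intro mult_left_mono) auto
    then show ?thesis using False by (simp add: eta_def mult.assoc mult.left_commute)
  qed
  show ?thesis unfolding Jfun_def using t1 t2 t3 u1 u2 by (simp add: field_simps)
qed

theorem theorem3:
  fixes N :: nat and f :: "int \<Rightarrow> real \<Rightarrow> real" and p q :: "int \<Rightarrow> real"
  assumes "N \<ge> 1"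
    and "\<forall>k \<in> {1..int N}. continuous_on UNIV (f k)"
    and "\<exists>m > 0. \<forall>k \<in> {1..int N}. \<forall>s. \<bar>s\<bar> \<ge> m \<longrightarrow> s * f k s \<ge> 0"
    and "eta' N p * pmin N p - eta N q * qmax N q > 0"
  shows "coercive_on N (Jfun N p q f)
    \<and> (\<exists>y. is_solution N p q f y
           \<and> ((\<exists>k0 \<in> {1..int N}. f k0 0 \<noteq> 0) \<longrightarrow> (\<exists>k \<in> {-1..int N + 2}. y k \<noteq> 0)))"
proof -
  note N = assms(1) and c = assms(2)
  obtain m where m: "m > 0" "\<forall>k \<in> {1..int N}. \<forall>s. \<bar>s\<bar> \<ge> m \<longrightarrow> s * f k s \<ge> 0"
    using assms(3) by blast
  have "\<forall>k\<in>{1..int N}. \<exists>C. \<forall>s. C \<le> Fprim f k s"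
  proof
    fix k assume k: "k \<in> {1..int N}"
    show "\<exists>C. \<forall>s. C \<le> Fprim f k s"
      by (rule Fprim_bdd[of f k m]) (use c k m in auto)
  qed
  then obtain Cf where Cf: "\<forall>k\<in>{1..int N}. \<forall>s. Cf k \<le> Fprim f k s" by metis
  define a where "a = (eta' N p * pmin N p - eta N q * qmax N q) / 2"
  define C0 where "C0 = (\<Sum>k=1..int N. Cf k)"
  have a: "a > 0" using assms(4) by (simp add: a_def)
  have low: "a * S0 N y + C0 \<le> Jfun N p q f y" if "y \<in> solution_set N" for y
    using J_lower[OF N that Cf] by (simp add: a_def C0_def)
  have coer: "coercive_on N (Jfun N p q f)"
    unfolding coercive_on_def
  proof
    fix M
    define R where "R = sqrt (\<bar>M - C0\<bar> / a)"
    have "\<forall>y\<in>solution_set N. ynorm N y > R \<longrightarrow> Jfun N p q f y > M"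
    proof (intro ballI impI)
      fix y assume y: "y \<in> solution_set N" and yR: "ynorm N y > R"
      have S0: "S0 N y \<ge> 0" unfolding S0_def by (simp add: sum_nonneg)
      have R0: "R \<ge> 0" unfolding R_def using a by simp
      have "R\<^sup>2 < (ynorm N y)\<^sup>2" using yR R0 by (intro power_strict_mono) auto
      moreover have "(ynorm N y)\<^sup>2 = S0 N y" unfolding ynorm_def S0_def[symmetric] using S0 by simp
      moreover have "R\<^sup>2 = \<bar>M - C0\<bar> / a" unfolding R_def using a by simp
      ultimately have "\<bar>M - C0\<bar> / a < S0 N y" by simp
      then have "\<bar>M - C0\<bar> < a * S0 N y" using a by (simp add: divide_less_eq mult.commute)
      then show "Jfun N p q f y > M" using low[OF y] by linarith
    qed
    then show "\<exists>R. \<forall>y\<in>solution_set N. R < ynorm N y \<longrightarrow> M < Jfun N p q f y" by blast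
  qed
  obtain y where y: "y \<in> solution_set N" and ymin: "\<forall>z\<in>solution_set N. Jfun N p q f y \<le> Jfun N p q f z"
    using min_on_sol[OF J_cont[OF c] coer] by blast
  have eq: "\<Delta> (\<Delta> (\<lambda>j. p j * \<Delta> (\<Delta> y) (j - 2))) k + \<Delta> (\<lambda>j. q j * \<Delta> y (j - 1)) k + f k (y k) = 0"
    if k: "k \<in> {1..int N}" for k
  proof -
    have "Jfun N p q f (\<lambda>i. y i + 0 * dl k i) \<le> Jfun N p q f (\<lambda>i. y i + t * dl k i)" for t
      using ymin pert_sol[OF y k, of t] by simp
    then show ?thesis
      using DERIV_local_min[OF J_deriv[OF c k, of p q y], of 1] by auto
  qed
  have sol: "is_solution N p q f y"
    unfolding is_solution_def using eq y by (auto simp: solution_set_def)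
  have nz: "\<exists>k \<in> {-1..int N + 2}. y k \<noteq> 0" if k0: "k0 \<in> {1..int N}" "f k0 0 \<noteq> 0" for k0
  proof (rule ccontr)
    assume "\<not> ?thesis"
    then have "y k = 0" for k
      using sol_zero[OF y, of k] by (cases "k \<in> {1..int N}") auto
    then have "y = (\<lambda>_. 0)" by auto
    then show False using eq[OF k0(1)] k0(2) by (simp add: fwd_diff_def)
  qed
  show ?thesis using coer sol nz by blast
qed

end
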